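(* Let $d\ge2$ be an integer and $(p_{nm})_{n,m\in\{0,\dots,d-1\}}$ a probability vector with $p_{0m}=0$ for all $m\in\{1,\dots,d-1\}$. Let the initial shared state be $\sum_{n,m}p_{nm}|\Phi^{n,m}\rangle\langle\Phi^{n,m}|$ (fidelity $p_{00}$), let $\mathcal{N}$ be the qudit Pauli channel with probabilities $p_{nm}$, and let $F_N$ be the fidelity $\langle\Phi^{0,0}|\rho_N|\Phi^{0,0}\rangle$ after $N$ successful rounds of the single-carrier protocol without adaptive pre-processing. Then $F_N\to1$ as $N\to\infty$ if and only if $$p_{00}>\max_{n\in\{1,\dots,d-1\}}p_{X=n},\qquad p_{X=n}:=\sum_{m=0}^{d-1}p_{nm}.$$
   Context: $\omega=e^{2\pi i/d}$; on $\mathbb{C}^d$, $X|j\rangle=|(j+1)\bmod d\rangle$, $Z|j\rangle=\omega^j|j\rangle$. Bell states $|\Phi^{n,m}\rangle=\frac1{\sqrt d}\sum_{j=0}^{d-1}\omega^{mj}|j,(j+n)\bmod d\rangle$. The qudit Pauli channel is $\mathcal{N}(\rho)=\sum_{n,m}p_{nm}Z^mX^n\rho X^{-n}Z^{-m}$. Single-carrier round: Alice prepares a carrier $T$ in $|0\rangle$ and applies $|j\rangle_A|k\rangle_T\mapsto|j\rangle_A|(j+k)\bmod d\rangle_T$; the carrier passes through $\mathcal{N}$; Bob applies $|j\rangle_B|k\rangle_T\mapsto|j\rangle_B|(k-j)\bmod d\rangle_T$ and measures $T$ in the computational basis; the round succeeds iff the outcome is $0$, and then the shared state is kept. Successive rounds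 act on the kept state, each with a fresh carrier through $\mathcal{N}$. *)

theory Defs
  imports Complex_Main
begin

type_synonym idx2 = "nat \<times> nat"
type_synonym idx3 = "nat \<times> nat \<times> nat"

definition omega :: "nat \<Rightarrow> complex" where
  "omega d = cis (2 * pi / real d)"

definition I2 :: "nat \<Rightarrow> idx2 set" where "I2 d = {0..<d} \<times> {0..<d}"
definition I3 :: "nat \<Rightarrow> idx3 set" where "I3 d = {0..<d} \<times> {0..<d} \<times> {0..<d}"

text \<open>Operators on A (x) B (x) T as matrices indexed by basis triples (a,b,t).\<close>
definition mmul3 :: "nat \<Rightarrow> (idx3 \<Rightarrow> idx3 \<Rightarrow> complex) \<Rightarrow> (idx3 \<Rightarrow> idx3 \<Rightarrow> complex) \<Rightarrow> idx3 \<Rightarrow> idx3 \<Rightarrow> complex" where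
  "mmul3 d A B = (\<lambda>i j. \<Sum>k\<in>I3 d. A i k * B k j)"

definition adj3 :: "(idx3 \<Rightarrow> idx3 \<Rightarrow> complex) \<Rightarrow> idx3 \<Rightarrow> idx3 \<Rightarrow> complex" where
  "adj3 A = (\<lambda>i j. cnj (A j i))"

definition conj3 :: "nat \<Rightarrow> (idx3 \<Rightarrow> idx3 \<Rightarrow> complex) \<Rightarrow> (idx3 \<Rightarrow> idx3 \<Rightarrow> complex) \<Rightarrow> idx3 \<Rightarrow> idx3 \<Rightarrow> complex" where
  "conj3 d U \<rho> = mmul3 d (mmul3 d U \<rho>) (adj3 U)"

text \<open>Alice: |j>_A |k>_T -> |j>_A |(j+k) mod d>_T.\<close>
definition alice_gate :: "nat \<Rightarrow> idx3 \<Rightarrow> idx3 \<Rightarrow> complex" where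
  "alice_gate d = (\<lambda>(a,b,t) (a',b',t'). if a = a' \<and> b = b' \<and> t = (a' + t') mod d then 1 else 0)"

text \<open>Bob: |j>_B |k>_T -> |j>_B |(k-j) mod d>_T  (indices below d).\<close>
definition bob_gate :: "nat \<Rightarrow> idx3 \<Rightarrow> idx3 \<Rightarrow> complex" where
  "bob_gate d = (\<lambda>(a,b,t) (a',b',t'). if a = a' \<and> b = b' \<and> t = (t' + d - b') mod d then 1 else 0)"

text \<open>The operator Z^m X^n acting on the carrier T (identity on A,B).\<close>
definition pauliT :: "nat \<Rightarrow> nat \<Rightarrow> nat \<Rightarrow> idx3 \<Rightarrow> idx3 \<Rightarrow> complex" where
  "pauliT d n m = (\<lambda>(a,b,t) (a',b',t').
     if a = a' \<and> b = b' \<and> t = (t' + n) mod d then omega d ^ (m * t) else 0)"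

text \<open>Qudit Pauli channel on T; X^{-n} Z^{-m} is the adjoint of the unitary Z^m X^n.\<close>
definition channelT :: "nat \<Rightarrow> (nat \<Rightarrow> nat \<Rightarrow> real) \<Rightarrow> (idx3 \<Rightarrow> idx3 \<Rightarrow> complex) \<Rightarrow> idx3 \<Rightarrow> idx3 \<Rightarrow> complex" where
  "channelT d p \<rho> = (\<lambda>i j. \<Sum>n<d. \<Sum>m<d. complex_of_real (p n m) * conj3 d (pauliT d n m) \<rho> i j)"

text \<open>rho_AB (x) |0><0|_T\<close>
definition append_carrier :: "(idx2 \<Rightarrow> idx2 \<Rightarrow> complex) \<Rightarrow> idx3 \<Rightarrow> idx3 \<Rightarrow> complex" where
  "append_carrier \<rho> = (\<lambda>(a,b,t) (a',b',t'). if t = 0 \<and> t' = 0 then \<rho> (a,b) (a',b') else 0)"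

text \<open>Unnormalised post-measurement AB state for carrier outcome 0: (I (x) <0|) sigma (I (x) |0>).\<close>
definition proj0 :: "(idx3 \<Rightarrow> idx3 \<Rightarrow> complex) \<Rightarrow> idx2 \<Rightarrow> idx2 \<Rightarrow> complex" where
  "proj0 \<sigma> = (\<lambda>(a,b) (a',b'). \<sigma> (a,b,0) (a',b',0))"

definition tr2 :: "nat \<Rightarrow> (idx2 \<Rightarrow> idx2 \<Rightarrow> complex) \<Rightarrow> complex" where
  "tr2 d \<rho> = (\<Sum>i\<in>I2 d. \<rho> i i)"

definition protocol_round :: "nat \<Rightarrow> (nat \<Rightarrow> nat \<Rightarrow> real) \<Rightarrow> (idx2 \<Rightarrow> idx2 \<Rightarrow> complex) \<Rightarrow> idx2 \<Rightarrow> idx2 \<Rightarrow> complex" where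
  "protocol_round d p \<rho> =
     (let \<sigma> = proj0 (conj3 d (bob_gate d) (channelT d p (conj3 d (alice_gate d) (append_carrier \<rho>))))
      in (\<lambda>i j. \<sigma> i j / tr2 d \<sigma>))"

text \<open>Bell state |Phi^{n,m}> as a coefficient vector on basis pairs (a,b).\<close>
definition bell :: "nat \<Rightarrow> nat \<Rightarrow> nat \<Rightarrow> idx2 \<Rightarrow> complex" where
  "bell d n m = (\<lambda>(a,b). if a < d \<and> b < d \<and> b = (a + n) mod d
       then omega d ^ (m * a) / complex_of_real (sqrt (real d)) else 0)"

definition bell_mixture :: "nat \<Rightarrow> (nat \<Rightarrow> nat \<Rightarrow> real) \<Rightarrow> idx2 \<Rightarrow> idx2 \<Rightarrow> complex" where
  "bell_mixture d p = (\<lambda>i j. \<Sum>n<d. \<Sum>m<d. complex_of_real (p n m) * bell d n m i * cnj (bell d n m j))"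

definition fidelity :: "nat \<Rightarrow> (idx2 \<Rightarrow> idx2 \<Rightarrow> complex) \<Rightarrow> complex" where
  "fidelity d \<rho> = (\<Sum>i\<in>I2 d. \<Sum>j\<in>I2 d. cnj (bell d 0 0 i) * \<rho> i j * bell d 0 0 j)"

definition rho_N :: "nat \<Rightarrow> (nat \<Rightarrow> nat \<Rightarrow> real) \<Rightarrow> nat \<Rightarrow> idx2 \<Rightarrow> idx2 \<Rightarrow> complex" where
  "rho_N d p N = (protocol_round d p ^^ N) (bell_mixture d p)"

end

theory Submission
  imports Defs
begin


lemma mmul3_left:
  assumes U: "\<And>k. k \<in> I3 d \<Longrightarrow> U i k = (if Pi \<and> k = gi then ci else 0)"
    and g: "Pi \<Longrightarrow> gi \<in> I3 d"
  shows "mmul3 d U M i l = (if Pi then ci * M gi l else 0)"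
proof -
  have "mmul3 d U M i l = (\<Sum>k\<in>I3 d. if Pi \<and> k = gi then ci * M k l else 0)"
    unfolding mmul3_def by (rule sum.cong) (auto simp: U)
  also have "\<dots> = (if Pi then ci * M gi l else 0)"
    using g by (cases Pi) (auto simp: I3_def)
  finally show ?thesis .
qed

lemma mmul3_right:
  assumes U: "\<And>k. k \<in> I3 d \<Longrightarrow> U j k = (if Pj \<and> k = gj then cj else 0)"
    and g: "Pj \<Longrightarrow> gj \<in> I3 d"
  shows "mmul3 d M (adj3 U) i j = (if Pj then M i gj * cnj cj else 0)"
proof -
  have "mmul3 d M (adj3 U) i j = (\<Sum>k\<in>I3 d. if Pj \<and> k = gj then M i k * cnj cj else 0)"
    unfolding mmul3_def adj3_def by (rule sum.cong) (auto simp: U)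
  also have "\<dots> = (if Pj then M i gj * cnj cj else 0)"
    using g by (cases Pj) (auto simp: I3_def)
  finally show ?thesis .
qed

lemma conj3_mono:
  assumes U: "\<And>i k. k \<in> I3 d \<Longrightarrow> U i k = (if P i \<and> k = g i then c i else 0)"
    and g: "\<And>i. P i \<Longrightarrow> g i \<in> I3 d"
  shows "conj3 d U M i j = (if P i \<and> P j then c i * cnj (c j) * M (g i) (g j) else 0)"
proof -
  have "conj3 d U M i j = (if P j then mmul3 d U M i (g j) * cnj (c j) else 0)"
    unfolding conj3_def by (rule mmul3_right[OF U g])
  also have "\<dots> = (if P i \<and> P j then c i * cnj (c j) * M (g i) (g j) else 0)"
    using mmul3_left[where U=U and i=i and M=M and l="g j" and Pi="P i" and gi="g i" and ci="c i" and d=d, OF U g] by auto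
  finally show ?thesis .
qed

lemma mod2: "(n::nat) < 2*d \<Longrightarrow> n mod d = (if n < d then n else n - d)"
  by (metis le_mod_geq less_diff_conv2 linorder_not_le mod_less mult_2 nat_le_linear)

lemma modeq: "(x::nat)<d \<Longrightarrow> y<d \<Longrightarrow> t<d \<Longrightarrow> ((x+y) mod d = t) \<longleftrightarrow> (y = (t+d-x) mod d)"
  using mod2[of "x+y" d] mod2[of "t+d-x" d] by auto

lemma modeq2: "(x::nat)<d \<Longrightarrow> y<d \<Longrightarrow> (t = (x+y) mod d) \<longleftrightarrow> (t < d \<and> y = (t+d-x) mod d)"
  using modeq[of x d y t] by (metis mod_less_divisor order.strict_trans1 zero_le)

lemma alice_form: "k \<in> I3 d \<Longrightarrow> alice_gate d i k =
  (if (\<lambda>(a,b,t). a<d \<and> b<d \<and> t<d) i \<and> k = (\<lambda>(a,b,t). (a,b,(t+d-a) mod d)) i then 1 else 0)"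
proof -
  assume k: "k \<in> I3 d"
  obtain a b t where i: "i = (a,b,t)" by (cases i) auto
  obtain a' b' t' where kk: "k = (a',b',t')" by (cases k) auto
  have r: "a' < d" "b' < d" "t' < d" using k kk by (auto simp: I3_def)
  show ?thesis unfolding i kk alice_gate_def using r modeq2[of a' d t' t]
    by auto
qed

lemma bob_form: "k \<in> I3 d \<Longrightarrow> bob_gate d i k =
  (if (\<lambda>(a,b,t). a<d \<and> b<d \<and> t<d) i \<and> k = (\<lambda>(a,b,t). (a,b,(t+b) mod d)) i then 1 else 0)"
proof -
  assume k: "k \<in> I3 d"
  obtain a b t where i: "i = (a,b,t)" by (cases i) auto
  obtain a' b' t' where kk: "k = (a',b',t')" by (cases k) auto
  have r: "a' < d" "b' < d" "t' < d" using k kk by (auto simp: I3_def)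
  have "(t = (t' + d - b') mod d) \<longleftrightarrow> (t < d \<and> t' = (t + b') mod d)"
    using modeq2[of b' d t t'] r modeq[of b' d t t'] 
    by (metis add.commute mod_less_divisor order.strict_trans1 zero_le)
  then show ?thesis unfolding i kk bob_gate_def using r
    by auto
qed

lemma pauli_form: "n < d \<Longrightarrow> k \<in> I3 d \<Longrightarrow> pauliT d n m i k =
  (if (\<lambda>(a,b,t). a<d \<and> b<d \<and> t<d) i \<and> k = (\<lambda>(a,b,t). (a,b,(t+d-n) mod d)) i then
     (\<lambda>(a,b,t). omega d ^ (m*t)) i else 0)"
proof -
  assume k: "k \<in> I3 d" and n: "n < d"
  obtain a b t where i: "i = (a,b,t)" by (cases i) auto
  obtain a' b' t' where kk: "k = (a',b',t')" by (cases k) auto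
  have r: "a' < d" "b' < d" "t' < d" using k kk by (auto simp: I3_def)
  have "(t = (t' + n) mod d) \<longleftrightarrow> (t < d \<and> t' = (t + d - n) mod d)"
    using modeq2[of n d t' t] r n by (simp add: add.commute)
  then show ?thesis unfolding i kk pauliT_def using r
    by auto
qed

lemma conj_alice: "conj3 d (alice_gate d) M (a,b,t) (a',b',t') =
  (if a<d \<and> b<d \<and> t<d \<and> a'<d \<and> b'<d \<and> t'<d then M (a,b,(t+d-a) mod d) (a',b',(t'+d-a') mod d) else 0)"
  by (subst conj3_mono[OF alice_form]) (auto simp: I3_def)

lemma conj_bob: "conj3 d (bob_gate d) M (a,b,t) (a',b',t') =
  (if a<d \<and> b<d \<and> t<d \<and> a'<d \<and> b'<d \<and> t'<d then M (a,b,(t+b) mod d) (a',b',(t'+b') mod d) else 0)"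
  by (subst conj3_mono[OF bob_form]) (auto simp: I3_def)

lemma conj_pauli: "n < d \<Longrightarrow> conj3 d (pauliT d n m) M (a,b,t) (a',b',t') =
  (if a<d \<and> b<d \<and> t<d \<and> a'<d \<and> b'<d \<and> t'<d then omega d ^ (m*t) * cnj (omega d ^ (m*t')) * M (a,b,(t+d-n) mod d) (a',b',(t'+d-n) mod d) else 0)"
  by (subst conj3_mono[OF pauli_form]) (auto simp: I3_def)

definition sig :: "nat \<Rightarrow> (nat \<Rightarrow> nat \<Rightarrow> real) \<Rightarrow> (idx2 \<Rightarrow> idx2 \<Rightarrow> complex) \<Rightarrow> idx2 \<Rightarrow> idx2 \<Rightarrow> complex" where
  "sig d p \<rho> = proj0 (conj3 d (bob_gate d) (channelT d p (conj3 d (alice_gate d) (append_carrier \<rho>))))"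

lemma sig_formula:
  assumes "a<d" "b<d" "a'<d" "b'<d"
  shows "sig d p \<rho> (a,b) (a',b') = (\<Sum>n<d. \<Sum>m<d. complex_of_real (p n m) *
     (omega d ^ (m*b) * cnj (omega d ^ (m*b')) *
      (if ((b+d-n) mod d + d - a) mod d = 0 \<and> ((b'+d-n) mod d + d - a') mod d = 0 then \<rho> (a,b) (a',b') else 0)))"
proof -
  have d: "0 < d" using assms by auto
  show ?thesis
    unfolding sig_def proj0_def using assms
    apply (simp add: conj_bob channelT_def)
    apply (intro sum.cong refl)
    apply (simp add: conj_pauli conj_alice append_carrier_def)
    done
qed

lemma cond_n: "(a::nat)<d \<Longrightarrow> b<d \<Longrightarrow> n<d \<Longrightarrow>
   (((b+d-n) mod d + d - a) mod d = 0) \<longleftrightarrow> n = (b+d-a) mod d"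
proof -
  assume r: "a<d" "b<d" "n<d"
  define u where "u = (b+d-n) mod d"
  have "0 < d" using r by linarith
  then have u: "u < d" by (simp add: u_def)
  have "((u + d - a) mod d = 0) \<longleftrightarrow> u = a"
    using mod2[of "u+d-a" d] u r by auto
  moreover have "u = a \<longleftrightarrow> n = (b+d-a) mod d"
    unfolding u_def using mod2[of "b+d-n" d] mod2[of "b+d-a" d] r by auto
  ultimately show ?thesis unfolding u_def by simp
qed

lemma omega_norm: "omega d ^ k * cnj (omega d ^ k) = 1"
proof -
  have "norm (omega d ^ k) = 1" by (simp add: omega_def norm_power)
  then show ?thesis using complex_norm_square[of "omega d ^ k"] by simp
qed

lemma sumI2: "(\<Sum>i\<in>I2 d. f i) = (\<Sum>a<d. \<Sum>b<d. f (a,b))"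
  by (simp add: I2_def sum.cartesian_product lessThan_atLeast0)

definition PX :: "nat \<Rightarrow> (nat \<Rightarrow> nat \<Rightarrow> real) \<Rightarrow> nat \<Rightarrow> real" where
  "PX d p n = (\<Sum>m<d. p n m)"
definition nn :: "nat \<Rightarrow> nat \<Rightarrow> nat \<Rightarrow> nat" where
  "nn d a b = (b+d-a) mod d"
definition Zs :: "nat \<Rightarrow> (nat \<Rightarrow> nat \<Rightarrow> real) \<Rightarrow> nat \<Rightarrow> real" where
  "Zs d p k = (\<Sum>a<d. \<Sum>b<d. PX d p (nn d a b) ^ k)"
definition form :: "nat \<Rightarrow> (nat \<Rightarrow> nat \<Rightarrow> real) \<Rightarrow> (idx2 \<Rightarrow> idx2 \<Rightarrow> complex) \<Rightarrow> real \<Rightarrow> nat \<Rightarrow> bool" where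
  "form d p \<rho> c k \<longleftrightarrow> (\<forall>a<d. \<forall>b<d. \<rho> (a,b) (a,b) = complex_of_real (c * PX d p (nn d a b) ^ k))
     \<and> (\<forall>a<d. \<forall>a'<d. \<rho> (a,a) (a',a') = complex_of_real (c * p 0 0 ^ k))"

lemma sig_diag:
  assumes "a<d" "b<d"
  shows "sig d p \<rho> (a,b) (a,b) = \<rho> (a,b) (a,b) * complex_of_real (PX d p (nn d a b))"
proof -
  have "sig d p \<rho> (a,b) (a,b) = (\<Sum>n<d. \<Sum>m<d. complex_of_real (p n m) *
      (if n = nn d a b then \<rho> (a,b) (a,b) else 0))"
    unfolding sig_formula[OF assms assms] omega_norm
    by (intro sum.cong refl) (simp add: cond_n assms nn_def)
  also have "\<dots> = (\<Sum>n<d. if n = nn d a b then (\<Sum>m<d. complex_of_real (p n m)) * \<rho> (a,b) (a,b) else 0)"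
    by (intro sum.cong refl) (auto simp: sum_distrib_right)
  also have "\<dots> = \<rho> (a,b) (a,b) * complex_of_real (PX d p (nn d a b))"
    using assms by (simp add: nn_def PX_def)
  finally show ?thesis .
qed

context
  fixes d :: nat and p :: "nat \<Rightarrow> nat \<Rightarrow> real"
  assumes d2: "d \<ge> 2"
    and nonneg: "\<forall>n<d. \<forall>m<d. p n m \<ge> 0"
    and tot: "(\<Sum>n<d. \<Sum>m<d. p n m) = 1"
    and p0: "\<forall>m\<in>{1..<d}. p 0 m = 0"
begin

lemma PX0: "PX d p 0 = p 0 0"
proof -
  have "PX d p 0 = (\<Sum>m<d. if m = 0 then p 0 0 else 0)"
    unfolding PX_def using p0 by (intro sum.cong refl) auto
  then show ?thesis using d2 by simp
qed

lemma PX_nonneg: "n < d \<Longrightarrow> PX d p n \<ge> 0"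
  unfolding PX_def using nonneg by (auto intro: sum_nonneg)

lemma nn_lt: "a < d \<Longrightarrow> b < d \<Longrightarrow> nn d a b < d"
  unfolding nn_def using d2 by simp

lemma nn_0: "nn d a a = 0" unfolding nn_def by simp

lemma nn_ne: "a < d \<Longrightarrow> b < d \<Longrightarrow> a \<noteq> b \<Longrightarrow> nn d a b \<noteq> 0"
  unfolding nn_def using mod2[of "b+d-a" d] by auto

lemma nn_0n: "n < d \<Longrightarrow> nn d 0 n = n"
  unfolding nn_def using mod2[of "n+d" d] by auto

lemma sig_off:
  assumes "a<d" "a'<d"
  shows "sig d p \<rho> (a,a) (a',a') = \<rho> (a,a) (a',a') * complex_of_real (p 0 0)"
proof -
  have "sig d p \<rho> (a,a) (a',a') = (\<Sum>n<d. \<Sum>m<d. complex_of_real (p n m) *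
      (omega d ^ (m*a) * cnj (omega d ^ (m*a')) *
      (if n = 0 then \<rho> (a,a) (a',a') else 0)))"
    unfolding sig_formula[OF assms(1) assms(1) assms(2) assms(2)]
    by (intro sum.cong refl) (simp add: cond_n assms)
  also have "\<dots> = (\<Sum>n<d. if n = 0 then (\<Sum>m<d. complex_of_real (p 0 m) *
      (omega d ^ (m*a) * cnj (omega d ^ (m*a')) * \<rho> (a,a) (a',a'))) else 0)"
    by (intro sum.cong refl) auto
  also have "\<dots> = (\<Sum>m<d. complex_of_real (p 0 m) *
      (omega d ^ (m*a) * cnj (omega d ^ (m*a')) * \<rho> (a,a) (a',a')))"
    using d2 by simp
  also have "\<dots> = (\<Sum>m<d. if m = 0 then complex_of_real (p 0 0) * \<rho> (a,a) (a',a') else 0)"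
    using p0 by (intro sum.cong refl) auto
  also have "\<dots> = \<rho> (a,a) (a',a') * complex_of_real (p 0 0)"
    using d2 by simp
  finally show ?thesis .
qed

end



context
  fixes d :: nat and p :: "nat \<Rightarrow> nat \<Rightarrow> real"
  assumes d2: "d \<ge> 2"
    and nonneg: "\<forall>n<d. \<forall>m<d. p n m \<ge> 0"
    and tot: "(\<Sum>n<d. \<Sum>m<d. p n m) = 1"
    and p0: "\<forall>m\<in>{1..<d}. p 0 m = 0"
begin

lemmas PX0' = PX0[OF d2 nonneg tot p0]
lemmas PX_nonneg' = PX_nonneg[OF d2 nonneg tot p0]
lemmas nn_lt' = nn_lt[OF d2 nonneg tot p0]
lemmas nn_0n' = nn_0n[OF d2 nonneg tot p0]
lemmas nn_ne' = nn_ne[OF d2 nonneg tot p0]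
lemmas nn_0' = nn_0[OF d2 nonneg tot p0]
lemmas sig_off' = sig_off[OF d2 nonneg tot p0]

lemma Zs_pos: "Zs d p k > 0"
proof -
  have "\<exists>n<d. PX d p n > 0"
  proof (rule ccontr)
    assume "\<not> ?thesis"
    then have "\<forall>n<d. PX d p n \<le> 0" by auto
    then have "(\<Sum>n<d. PX d p n) \<le> 0" by (auto intro: sum_nonpos)
    then show False using tot by (simp add: PX_def)
  qed
  then obtain n where n: "n < d" "PX d p n > 0" by auto
  have "PX d p (nn d 0 n) ^ k \<le> (\<Sum>b<d. PX d p (nn d 0 b) ^ k)"
    by (rule member_le_sum) (use n PX_nonneg' nn_lt' d2 in auto)
  also have "\<dots> \<le> Zs d p k"
    unfolding Zs_def
    by (rule member_le_sum[where f="\<lambda>a. \<Sum>b<d. PX d p (nn d a b) ^ k"])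
       (use PX_nonneg' nn_lt' d2 in \<open>auto intro!: sum_nonneg\<close>)
  finally have "PX d p (nn d 0 n) ^ k \<le> Zs d p k" .
  moreover have "PX d p (nn d 0 n) ^ k > 0" using n by (simp add: nn_0n')
  ultimately show ?thesis by linarith
qed

lemma tr_sig:
  assumes f: "form d p \<rho> c k"
  shows "tr2 d (sig d p \<rho>) = complex_of_real (c * Zs d p (Suc k))"
proof -
  have "tr2 d (sig d p \<rho>) = (\<Sum>a<d. \<Sum>b<d. complex_of_real (c * PX d p (nn d a b) ^ Suc k))"
    unfolding tr2_def sumI2
    by (intro sum.cong refl) (use f in \<open>simp add: sig_diag form_def\<close>)
  also have "\<dots> = complex_of_real (c * Zs d p (Suc k))"
    by (simp add: Zs_def sum_distrib_left)
  finally show ?thesis .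
qed

lemma step:
  assumes f: "form d p \<rho> c k" and c: "c > 0"
  shows "form d p (protocol_round d p \<rho>) (1 / Zs d p (Suc k)) (Suc k)"
proof -
  have pr: "protocol_round d p \<rho> = (\<lambda>i j. sig d p \<rho> i j / tr2 d (sig d p \<rho>))"
    unfolding protocol_round_def sig_def Let_def by simp
  have Z: "Zs d p (Suc k) > 0" by (rule Zs_pos)
  show ?thesis unfolding form_def pr tr_sig[OF f]
  proof safe
    fix a b assume ab: "a < d" "b < d"
    have "sig d p \<rho> (a, b) (a, b) = complex_of_real (c * PX d p (nn d a b) ^ k * PX d p (nn d a b))"
      using f ab by (simp add: sig_diag form_def)
    moreover have "(c * PX d p (nn d a b) ^ k * PX d p (nn d a b)) / (c * Zs d p (Suc k))
       = 1 / Zs d p (Suc k) * PX d p (nn d a b) ^ Suc k" using c Z by (simp add: field_simps)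
    ultimately show "sig d p \<rho> (a, b) (a, b) / complex_of_real (c * Zs d p (Suc k)) =
       complex_of_real (1 / Zs d p (Suc k) * PX d p (nn d a b) ^ Suc k)"
      by (metis of_real_divide)
  next
    fix a a' assume ab: "a < d" "a' < d"
    have "sig d p \<rho> (a, a) (a', a') = complex_of_real (c * p 0 0 ^ k * p 0 0)"
      using f ab by (simp add: sig_off' form_def)
    moreover have "(c * p 0 0 ^ k * p 0 0) / (c * Zs d p (Suc k))
       = 1 / Zs d p (Suc k) * p 0 0 ^ Suc k" using c Z by (simp add: field_simps)
    ultimately show "sig d p \<rho> (a, a) (a', a') / complex_of_real (c * Zs d p (Suc k)) =
       complex_of_real (1 / Zs d p (Suc k) * p 0 0 ^ Suc k)"
      by (metis of_real_divide)
  qed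
qed

lemma bell_abs: "bell d n m i * cnj (bell d n m i) =
   (if (case i of (a,b) \<Rightarrow> a < d \<and> b < d \<and> b = (a+n) mod d) then complex_of_real (1/real d) else 0)"
proof -
  obtain a b where i: "i = (a,b)" by (cases i) auto
  have s: "complex_of_real (sqrt (real d)) * complex_of_real (sqrt (real d)) = complex_of_real (real d)"
    unfolding of_real_mult[symmetric] by simp
  have sd: "complex_of_real (sqrt (real d)) \<noteq> 0" using d2 by simp
  have e: "omega d ^ (m*a) / complex_of_real (sqrt (real d)) * cnj (omega d ^ (m*a) / complex_of_real (sqrt (real d)))
     = (omega d ^ (m*a) * cnj (omega d ^ (m*a))) / (complex_of_real (sqrt (real d)) * complex_of_real (sqrt (real d)))"
    by (simp add: complex_cnj_divide)
  show ?thesis unfolding i bell_def using e omega_norm[of d "m*a"] s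
    by auto
qed

lemma base: "form d p (bell_mixture d p) (1 / real d) 1"
  unfolding form_def
proof safe
  fix a b assume ab: "a < d" "b < d"
  have "bell_mixture d p (a,b) (a,b) = (\<Sum>n<d. \<Sum>m<d. complex_of_real (p n m) *
      (if n = nn d a b then complex_of_real (1/real d) else 0))"
    unfolding bell_mixture_def
  proof (intro sum.cong refl)
    fix n m assume n: "n \<in> {..<d}"
    have c: "(b = (a+n) mod d) \<longleftrightarrow> n = nn d a b"
      using modeq2[of a d n b] ab n by (auto simp: nn_def)
    show "complex_of_real (p n m) * bell d n m (a, b) * cnj (bell d n m (a, b)) =
      complex_of_real (p n m) * (if n = nn d a b then complex_of_real (1 / real d) else 0)"
      unfolding mult.assoc bell_abs using ab c by simp
  qed
  also have "\<dots> = (\<Sum>n<d. if n = nn d a b then complex_of_real (PX d p n / real d) else 0)"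
    by (intro sum.cong refl) (auto simp: PX_def sum_divide_distrib)
  also have "\<dots> = complex_of_real (1 / real d * PX d p (nn d a b) ^ 1)"
    using nn_lt'[OF ab] by simp
  finally show "bell_mixture d p (a,b) (a,b) = complex_of_real (1 / real d * PX d p (nn d a b) ^ 1)" .
next
  fix a a' assume ab: "a < d" "a' < d"
  have "bell_mixture d p (a,a) (a',a') = (\<Sum>n<d. \<Sum>m<d. if n = 0 \<and> m = 0 then complex_of_real (p 0 0 / real d) else 0)"
    unfolding bell_mixture_def
  proof (intro sum.cong refl)
    fix n m assume n: "n \<in> {..<d}" and m: "m \<in> {..<d}"
    have c: "(x = (x+n) mod d) \<longleftrightarrow> n = 0" if "x < d" for x
      using modeq2[of x d n x] that n by auto
    have s: "complex_of_real (sqrt (real d)) * complex_of_real (sqrt (real d)) = complex_of_real (real d)"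
      unfolding of_real_mult[symmetric] by simp
    show "complex_of_real (p n m) * bell d n m (a, a) * cnj (bell d n m (a', a')) =
       (if n = 0 \<and> m = 0 then complex_of_real (p 0 0 / real d) else 0)"
    proof (cases "n = 0")
      case True
      then show ?thesis
      proof (cases "m = 0")
        case True
        then show ?thesis using \<open>n = 0\<close> ab s by (simp add: bell_def field_simps)
      next
        case False
        then have "p 0 m = 0" using p0 m by auto
        then show ?thesis using \<open>n = 0\<close> \<open>m \<noteq> 0\<close> by simp
      qed
    next
      case False
      then show ?thesis using c[OF ab(1)] by (simp add: bell_def)
    qed
  qed
  also have "\<dots> = (\<Sum>n<d. if n = 0 then complex_of_real (p 0 0 / real d) else 0)"
    by (intro sum.cong refl) (use d2 in auto)
  also have "\<dots> = complex_of_real (1 / real d * p 0 0 ^ 1)"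
    using d2 by simp
  finally show "bell_mixture d p (a,a) (a',a') = complex_of_real (1 / real d * p 0 0 ^ 1)" .
qed

lemma rhoN_form: "form d p (rho_N d p (Suc N)) (1 / Zs d p (Suc (Suc N))) (Suc (Suc N))"
proof (induction N)
  case 0
  have "rho_N d p (Suc 0) = protocol_round d p (bell_mixture d p)" by (simp add: rho_N_def)
  moreover have "1 / real d > 0" using d2 by simp
  ultimately show ?case using step[OF base] by simp
next
  case (Suc N)
  have "rho_N d p (Suc (Suc N)) = protocol_round d p (rho_N d p (Suc N))" by (simp add: rho_N_def)
  moreover have "1 / Zs d p (Suc (Suc N)) > 0" using Zs_pos by simp
  ultimately show ?case using step[OF Suc] by simp
qed

lemma fid_form:
  assumes f: "form d p \<rho> c k"
  shows "fidelity d \<rho> = complex_of_real (real d * c * p 0 0 ^ k)"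
proof -
  define s where "s = complex_of_real (sqrt (real d))"
  have ss: "cnj (1 / s) * (1 / s) = complex_of_real (1 / real d)"
    unfolding s_def by (simp flip: of_real_mult)
  have b00: "bell d 0 0 (a,b) = (if b = a then 1 / s else 0)" if "a<d" "b<d" for a b
    using that by (simp add: bell_def s_def)
  have "fidelity d \<rho> = (\<Sum>a<d. \<Sum>b<d. \<Sum>a'<d. \<Sum>b'<d.
      if b = a \<and> b' = a' then complex_of_real (1 / real d) * \<rho> (a,a) (a',a') else 0)"
    unfolding fidelity_def sumI2
  proof (intro sum.cong refl)
    fix a b a' b' assume r: "a \<in> {..<d}" "b \<in> {..<d}" "a' \<in> {..<d}" "b' \<in> {..<d}"
    show "cnj (bell d 0 0 (a, b)) * \<rho> (a, b) (a', b') * bell d 0 0 (a', b') =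
      (if b = a \<and> b' = a' then complex_of_real (1 / real d) * \<rho> (a, a) (a', a') else 0)"
      using r ss by (simp add: b00 field_simps)
  qed
  also have "\<dots> = (\<Sum>a<d. \<Sum>a'<d. complex_of_real (c * p 0 0 ^ k / real d))"
  proof (rule sum.cong[OF refl])
    fix a assume a: "a \<in> {..<d}"
    have "(\<Sum>b<d. \<Sum>a'<d. \<Sum>b'<d. if b = a \<and> b' = a' then complex_of_real (1 / real d) * \<rho> (a,a) (a',a') else 0)
       = (\<Sum>b<d. if b = a then (\<Sum>a'<d. \<Sum>b'<d. if b' = a' then complex_of_real (1 / real d) * \<rho> (a,a) (a',a') else 0) else 0)"
      by (intro sum.cong refl) auto
    also have "\<dots> = (\<Sum>a'<d. \<Sum>b'<d. if b' = a' then complex_of_real (1 / real d) * \<rho> (a,a) (a',a') else 0)"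
      using a by simp
    also have "\<dots> = (\<Sum>a'<d. complex_of_real (1 / real d) * \<rho> (a,a) (a',a'))"
      by (intro sum.cong refl) simp
    also have "\<dots> = (\<Sum>a'<d. complex_of_real (c * p 0 0 ^ k / real d))"
      using f a by (intro sum.cong refl) (simp add: form_def flip: of_real_mult)
    finally show "(\<Sum>b<d. \<Sum>a'<d. \<Sum>b'<d. if b = a \<and> b' = a' then complex_of_real (1 / real d) * \<rho> (a,a) (a',a') else 0)
       = (\<Sum>a'<d. complex_of_real (c * p 0 0 ^ k / real d))" .
  qed
  also have "\<dots> = complex_of_real (real d * c * p 0 0 ^ k)"
    using d2 by (simp flip: of_real_mult) (metis of_real_mult of_real_of_nat_eq mult.assoc)
  finally show ?thesis .
qed

definition H :: "nat \<Rightarrow> real" where "H k = real d * p 0 0 ^ k / Zs d p k"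

lemma fid_H: "fidelity d (rho_N d p (Suc N)) = complex_of_real (H (N + 2))"
  unfolding fid_form[OF rhoN_form] H_def by simp

lemma reduce: "(\<lambda>N. fidelity d (rho_N d p N)) \<longlonglongrightarrow> 1 \<longleftrightarrow> H \<longlonglongrightarrow> 1"
proof -
  have "(\<lambda>N. fidelity d (rho_N d p N)) \<longlonglongrightarrow> 1 \<longleftrightarrow> (\<lambda>N. fidelity d (rho_N d p (Suc N))) \<longlonglongrightarrow> 1"
    by (rule filterlim_sequentially_Suc[symmetric])
  also have "\<dots> \<longleftrightarrow> (\<lambda>N. complex_of_real (H (N + 2))) \<longlonglongrightarrow> complex_of_real 1"
    by (simp add: fid_H)
  also have "\<dots> \<longleftrightarrow> (\<lambda>N. H (N + 2)) \<longlonglongrightarrow> 1"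
    by (rule tendsto_of_real_iff)
  also have "\<dots> \<longleftrightarrow> H \<longlonglongrightarrow> 1"
  proof
    assume "(\<lambda>N. H (N + 2)) \<longlonglongrightarrow> 1" then show "H \<longlonglongrightarrow> 1" by (rule LIMSEQ_offset)
  next
    assume "H \<longlonglongrightarrow> 1" then show "(\<lambda>N. H (N + 2)) \<longlonglongrightarrow> 1" by (rule LIMSEQ_ignore_initial_segment)
  qed
  finally show ?thesis .
qed

definition MX where "MX = Max (PX d p ` {1..<d})"

lemma MX_ge: "n \<in> {1..<d} \<Longrightarrow> PX d p n \<le> MX"
  unfolding MX_def by (rule Max_ge) auto

lemma MX_in: "\<exists>n\<in>{1..<d}. PX d p n = MX"
proof -
  have "MX \<in> PX d p ` {1..<d}" unfolding MX_def using d2 by (intro Max_in) auto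
  then show ?thesis by auto
qed

lemma suff: assumes q: "p 0 0 > MX" shows "H \<longlonglongrightarrow> 1"
proof -
  define q where "q = p 0 0"
  have "MX \<ge> 0" using MX_ge[of 1] PX_nonneg'[of 1] d2 by auto
  then have qp: "q > 0" using q q_def by simp
  have lim: "(\<lambda>k. (PX d p (nn d a b) / q) ^ k) \<longlonglongrightarrow> (if a = b then 1 else 0)"
    if ab: "a < d" "b < d" for a b
  proof (cases "a = b")
    case True
    then show ?thesis using qp by (simp add: nn_0' PX0' q_def)
  next
    case False
    have n1: "nn d a b \<in> {1..<d}" using nn_ne'[OF ab False] nn_lt'[OF ab] by auto
    have "PX d p (nn d a b) < q" using MX_ge[OF n1] q q_def by simp
    moreover have "PX d p (nn d a b) \<ge> 0" using PX_nonneg' nn_lt'[OF ab] by simp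
    ultimately have "norm (PX d p (nn d a b) / q) < 1" using qp by simp
    then have "(\<lambda>k. (PX d p (nn d a b) / q) ^ k) \<longlonglongrightarrow> 0" by (rule LIMSEQ_power_zero)
    then show ?thesis using False by simp
  qed
  have R: "(\<lambda>k. Zs d p k / q ^ k) \<longlonglongrightarrow> (\<Sum>a<d. \<Sum>b<d. if a = b then 1 else 0)"
  proof -
    have e: "Zs d p k / q ^ k = (\<Sum>a<d. \<Sum>b<d. (PX d p (nn d a b) / q) ^ k)" for k
      unfolding Zs_def by (simp add: sum_divide_distrib power_divide)
    show ?thesis unfolding e
      by (intro tendsto_sum) (use lim in auto)
  qed
  have s: "(\<Sum>a<d. \<Sum>b<d. if a = b then 1 else 0) = real d" by simp
  have "(\<lambda>k. real d / (Zs d p k / q ^ k)) \<longlonglongrightarrow> real d / real d"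
    using R d2 unfolding s by (intro tendsto_divide tendsto_const) auto
  moreover have "real d / (Zs d p k / q ^ k) = H k" for k
    unfolding H_def q_def[symmetric] using qp by simp
  ultimately show ?thesis using d2 by simp
qed

lemma nec: assumes lim: "H \<longlonglongrightarrow> 1" shows "p 0 0 > MX"
proof (rule ccontr)
  assume "\<not> p 0 0 > MX"
  then have qM: "p 0 0 \<le> MX" by simp
  define q where "q = p 0 0"
  obtain n0 where n0: "n0 \<in> {1..<d}" "PX d p n0 = MX" using MX_in by auto
  have q0: "q \<ge> 0" using nonneg d2 q_def by auto
  have bound: "H k \<le> real d / (real d + 1)" for k
  proof -
    have pt: "PX d p (nn d a b) ^ k \<ge> (if a = b then q ^ k else 0) + (if a = 0 \<and> b = n0 then q ^ k else 0)"
      if ab: "a < d" "b < d" for a b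
    proof -
      have T0: "PX d p (nn d a b) ^ k \<ge> 0" using PX_nonneg' nn_lt'[OF ab] by simp
      show ?thesis
      proof (cases "a = b")
        case True
        then have "\<not> (a = 0 \<and> b = n0)" using n0 by auto
        then show ?thesis using True n0 by (auto simp: nn_0' PX0' q_def)
      next
        case False
        show ?thesis
        proof (cases "a = 0 \<and> b = n0")
          case True
          then have "nn d a b = n0" using nn_0n' n0 by auto
          then have "PX d p (nn d a b) ^ k \<ge> q ^ k"
            using qM n0 q0 q_def by (simp add: power_mono)
          then show ?thesis using True False by simp
        qed (use False T0 in auto)
      qed
    qed
    have "(\<Sum>a<d. \<Sum>b<d. (if a = b then q ^ k else 0) + (if a = 0 \<and> b = n0 then q ^ k else 0)) \<le> Zs d p k"
      unfolding Zs_def by (intro sum_mono) (use pt in auto)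
    moreover have "(\<Sum>a<d. \<Sum>b<d. (if a = b then q ^ k else 0) + (if a = 0 \<and> b = n0 then q ^ k else 0))
        = real d * q ^ k + q ^ k"
    proof -
      have "(\<Sum>a<d. \<Sum>b<d. (if a = b then q ^ k else 0) + (if a = 0 \<and> b = n0 then q ^ k else 0))
          = (\<Sum>a<d. q ^ k + (if a = 0 then q ^ k else 0))"
      proof (rule sum.cong[OF refl])
        fix a assume a: "a \<in> {..<d}"
        have "(\<Sum>b<d. (if a = b then q ^ k else 0) + (if a = 0 \<and> b = n0 then q ^ k else 0))
           = (\<Sum>b<d. if a = b then q ^ k else 0) + (\<Sum>b<d. if a = 0 \<and> b = n0 then q ^ k else 0)"
          by (rule sum.distrib)
        moreover have "(\<Sum>b<d. if a = b then q ^ k else (0::real)) = q ^ k" using a by simp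
        moreover have "(\<Sum>b<d. if a = 0 \<and> b = n0 then q ^ k else (0::real)) = (if a = 0 then q ^ k else 0)"
          using n0 by (cases "a = 0") simp_all
        ultimately show "(\<Sum>b<d. (if a = b then q ^ k else 0) + (if a = 0 \<and> b = n0 then q ^ k else 0))
           = q ^ k + (if a = 0 then q ^ k else 0)" by simp
      qed
      also have "\<dots> = real d * q ^ k + q ^ k" using d2 by (simp add: sum.distrib)
      finally show ?thesis .
    qed
    ultimately have Zb: "(real d + 1) * q ^ k \<le> Zs d p k" by (simp add: algebra_simps)
    have Zp: "Zs d p k > 0" by (rule Zs_pos)
    have dp: "real d > 0" using d2 by simp
    have "H k = real d * q ^ k / Zs d p k" unfolding H_def q_def ..
    also have "\<dots> \<le> real d / (real d + 1)"
    proof -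
      have "real d * q ^ k = real d / (real d + 1) * ((real d + 1) * q ^ k)" using dp by simp
      also have "\<dots> \<le> real d / (real d + 1) * Zs d p k"
        by (rule mult_left_mono[OF Zb]) (use dp in simp)
      finally show ?thesis by (simp add: pos_divide_le_eq[OF Zp])
    qed
    finally show ?thesis .
  qed
  have "1 \<le> real d / (real d + 1)"
    by (rule LIMSEQ_le_const2[OF lim]) (use bound in auto)
  then show False using d2 by (simp add: field_simps)
qed

end


theorem proposition2:
  fixes d :: nat and p :: "nat \<Rightarrow> nat \<Rightarrow> real"
  assumes "d \<ge> 2"
    and "\<forall>n<d. \<forall>m<d. p n m \<ge> 0"
    and "(\<Sum>n<d. \<Sum>m<d. p n m) = 1"
    and "\<forall>m\<in>{1..<d}. p 0 m = 0"
  shows "(\<lambda>N. fidelity d (rho_N d p N)) \<longlonglongrightarrow> 1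
     \<longleftrightarrow> p 0 0 > Max ((\<lambda>n. \<Sum>m<d. p n m) ` {1..<d})"
proof -
  have e: "(\<lambda>n. \<Sum>m<d. p n m) = PX d p" by (rule ext) (simp add: PX_def)
  have m: "Max (PX d p ` {1..<d}) = MX d p" by (rule MX_def[OF assms, symmetric])
  show ?thesis unfolding e m
    using reduce[OF assms] suff[OF assms] nec[OF assms] by blast
qed

end
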